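(* Fix an RWA-P instance (setting as in the context) and $\alpha,\beta>0$ with $\beta/\alpha>|R|(M-2)+2$, where $M=\max_{r\in R}\big(\max_{w\in W^r}B^r_w+\max_{p\in P^r}B^r_p\big)$. Let $B^r_{w_{\min}}=\min_{w\in W^r}B^r_w$ and $B^r_{p_{\min}}=\min_{p\in P^r}B^r_p$. If $$\rho>\beta(|R|+1)-\alpha\Big(1+\sum_{r\in R}\big(B^r_{w_{\min}}+B^r_{p_{\min}}\big)\Big),\qquad \rho>0,$$ then every minimizer over all binary vectors $(x,y)$ of $$Q(x,y)=f(x,y)+\rho\sum_{r}\Big(\sum_{w}x^r_w-\sum_{p}y^r_p\Big)^2+\rho\sum_r\Big(\sum_w x^r_w-1\Big)\Big(\sum_w x^r_w\Big)+\rho\!\!\sum_{(r,w,p)\in\mathcal C_1}\!\!x^r_wy^r_p+\rho\!\!\!\sum_{(r_1,r_2,w,p)\in\mathcal C_2}\!\!\!x^{r_1}_wy^{r_2}_p+\rho\!\!\!\sum_{(r_1,r_2,w_1,w_2)\in\mathcal C_3}\!\!\!x^{r_1}_{w_1}x^{r_2}_{w_2}+\rho\!\!\!\sum_{(r_1,r_2,p_1,p_2)\in\mathcal C_4}\!\!\!y^{r_1}_{p_1}y^{r_2}_{p_2}$$ is a feasible solution that minimizes $f$ over all feasible solutions.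
   Context: An RWA-P instance consists of: a directed graph $G=(V,E)$ (parallel arcs allowed) whose arcs are called links; a finite set $\Lambda$ of wavelengths; a finite set $R$ of requests, each with a source $s^r$ and distinct destination $t^r$; and for each $r$ nonempty finite sets $W^r$ (working) and $P^r$ (protection) of lightpaths, each lightpath $\ell$ being a directed $s^r$–$t^r$ path in $G$ with link set $E[\ell]$, length $B^r_\ell=|E[\ell]|\ge1$, and wavelength $\Lambda[\ell]\in\Lambda$. Conflict sets: $\mathcal C_1=\{(r,w,p): w\in W^r,p\in P^r, E[w]\cap E[p]\ne\emptyset\}$; $\mathcal C_2=\{(r_1,r_2,w,p): r_1\ne r_2, w\in W^{r_1}, p\in P^{r_2}, \Lambda[w]=\Lambda[p], E[w]\cap E[p]\ne\emptyset\}$; $\mathcal C_3=\{(r_1,r_2,w_1,w_2): w_i\in W^{r_i}, (r_1,w_1)\ne(r_2,w_2), \Lambda[w_1]=\Lambda[w_2], E[w_1]\cap E[w_2]\neq\emptyset\}$; $\mathcal C_4$ analogously for distinct protection lightpaths. A solution is binary $x=(x^r_w)$, $y=(y^r_p)$; feasible if for every $r$, $\sum_w x^r_w=\sum_p y^r_p$ and $\sum_w x^r_w\le1$, and for each tuple in $\mathcal C_1,\dots,\mathcal C_4$ the two corresponding variables sum to at most 1. $f(x,y)=\alpha\sum_r\big(\sum_wB^r_wx^r_w+\sum_pB^r_py^r_p\big)-\beta\sum_r\sum_w x^r_w$. *)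

theory Defs
  imports Complex_Main "Graph_Theory.Arc_Walk"
begin

record ('v, 'e, 'c, 'r, 'l) rwap =
  graph :: "('v, 'e) pre_digraph"
  wls   :: "'c set"
  reqs  :: "'r set"
  src   :: "'r \<Rightarrow> 'v"
  dst   :: "'r \<Rightarrow> 'v"
  work  :: "'r \<Rightarrow> 'l set"
  prot  :: "'r \<Rightarrow> 'l set"
  lpath :: "'l \<Rightarrow> 'e list"
  lwl   :: "'l \<Rightarrow> 'c"

definition rwap_instance :: "('v, 'e, 'c, 'r, 'l) rwap \<Rightarrow> bool" where
  "rwap_instance I \<longleftrightarrow>
     fin_digraph (graph I) \<and> finite (wls I) \<and> finite (reqs I) \<and>
     (\<forall>r\<in>reqs I. src I r \<noteq> dst I r \<and>
        finite (work I r) \<and> work I r \<noteq> {} \<and>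
        finite (prot I r) \<and> prot I r \<noteq> {} \<and>
        (\<forall>l\<in>work I r \<union> prot I r.
            pre_digraph.apath (graph I) (src I r) (lpath I l) (dst I r) \<and>
            lwl I l \<in> wls I))"

definition links :: "('v, 'e, 'c, 'r, 'l) rwap \<Rightarrow> 'l \<Rightarrow> 'e set" where
  "links I l = set (lpath I l)"

definition blen :: "('v, 'e, 'c, 'r, 'l) rwap \<Rightarrow> 'l \<Rightarrow> real" where
  "blen I l = real (card (links I l))"

definition C1 :: "('v, 'e, 'c, 'r, 'l) rwap \<Rightarrow> ('r \<times> 'l \<times> 'l) set" where
  "C1 I = {(r, w, p). r \<in> reqs I \<and> w \<in> work I r \<and> p \<in> prot I r \<and>
                      links I w \<inter> links I p \<noteq> {}}"

definition C2 :: "('v, 'e, 'c, 'r, 'l) rwap \<Rightarrow> ('r \<times> 'r \<times> 'l \<times> 'l) set" where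
  "C2 I = {(r1, r2, w, p). r1 \<in> reqs I \<and> r2 \<in> reqs I \<and> r1 \<noteq> r2 \<and>
             w \<in> work I r1 \<and> p \<in> prot I r2 \<and> lwl I w = lwl I p \<and>
             links I w \<inter> links I p \<noteq> {}}"

definition C3 :: "('v, 'e, 'c, 'r, 'l) rwap \<Rightarrow> ('r \<times> 'r \<times> 'l \<times> 'l) set" where
  "C3 I = {(r1, r2, w1, w2). r1 \<in> reqs I \<and> r2 \<in> reqs I \<and>
             w1 \<in> work I r1 \<and> w2 \<in> work I r2 \<and> (r1, w1) \<noteq> (r2, w2) \<and>
             lwl I w1 = lwl I w2 \<and> links I w1 \<inter> links I w2 \<noteq> {}}"

definition C4 :: "('v, 'e, 'c, 'r, 'l) rwap \<Rightarrow> ('r \<times> 'r \<times> 'l \<times> 'l) set" where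
  "C4 I = {(r1, r2, p1, p2). r1 \<in> reqs I \<and> r2 \<in> reqs I \<and>
             p1 \<in> prot I r1 \<and> p2 \<in> prot I r2 \<and> (r1, p1) \<noteq> (r2, p2) \<and>
             lwl I p1 = lwl I p2 \<and> links I p1 \<inter> links I p2 \<noteq> {}}"

text \<open>A binary vector (x, y): x r w \<in> {0,1} for r \<in> R, w \<in> W^r, and similarly y;
entries outside the index set are fixed to 0 (canonical representation).\<close>
definition binary :: "('v, 'e, 'c, 'r, 'l) rwap \<Rightarrow> ('r \<Rightarrow> 'l \<Rightarrow> real) \<Rightarrow> ('r \<Rightarrow> 'l \<Rightarrow> real) \<Rightarrow> bool" where
  "binary I x y \<longleftrightarrow>
     (\<forall>r w. x r w \<in> {0, 1} \<and> y r w \<in> {0, 1}) \<and>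
     (\<forall>r w. \<not> (r \<in> reqs I \<and> w \<in> work I r) \<longrightarrow> x r w = 0) \<and>
     (\<forall>r p. \<not> (r \<in> reqs I \<and> p \<in> prot I r) \<longrightarrow> y r p = 0)"

definition feasible :: "('v, 'e, 'c, 'r, 'l) rwap \<Rightarrow> ('r \<Rightarrow> 'l \<Rightarrow> real) \<Rightarrow> ('r \<Rightarrow> 'l \<Rightarrow> real) \<Rightarrow> bool" where
  "feasible I x y \<longleftrightarrow> binary I x y \<and>
     (\<forall>r\<in>reqs I. (\<Sum>w\<in>work I r. x r w) = (\<Sum>p\<in>prot I r. y r p) \<and>
                  (\<Sum>w\<in>work I r. x r w) \<le> 1) \<and>
     (\<forall>(r, w, p)\<in>C1 I. x r w + y r p \<le> 1) \<and>
     (\<forall>(r1, r2, w, p)\<in>C2 I. x r1 w + y r2 p \<le> 1) \<and>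
     (\<forall>(r1, r2, w1, w2)\<in>C3 I. x r1 w1 + x r2 w2 \<le> 1) \<and>
     (\<forall>(r1, r2, p1, p2)\<in>C4 I. y r1 p1 + y r2 p2 \<le> 1)"

definition fobj :: "('v, 'e, 'c, 'r, 'l) rwap \<Rightarrow> real \<Rightarrow> real \<Rightarrow> ('r \<Rightarrow> 'l \<Rightarrow> real) \<Rightarrow> ('r \<Rightarrow> 'l \<Rightarrow> real) \<Rightarrow> real" where
  "fobj I \<alpha> \<beta> x y =
     \<alpha> * (\<Sum>r\<in>reqs I. (\<Sum>w\<in>work I r. blen I w * x r w) + (\<Sum>p\<in>prot I r. blen I p * y r p))
     - \<beta> * (\<Sum>r\<in>reqs I. \<Sum>w\<in>work I r. x r w)"

definition Qobj :: "('v, 'e, 'c, 'r, 'l) rwap \<Rightarrow> real \<Rightarrow> real \<Rightarrow> real \<Rightarrow> ('r \<Rightarrow> 'l \<Rightarrow> real) \<Rightarrow> ('r \<Rightarrow> 'l \<Rightarrow> real) \<Rightarrow> real" where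
  "Qobj I \<alpha> \<beta> \<rho> x y =
     fobj I \<alpha> \<beta> x y
     + \<rho> * (\<Sum>r\<in>reqs I. ((\<Sum>w\<in>work I r. x r w) - (\<Sum>p\<in>prot I r. y r p))^2)
     + \<rho> * (\<Sum>r\<in>reqs I. ((\<Sum>w\<in>work I r. x r w) - 1) * (\<Sum>w\<in>work I r. x r w))
     + \<rho> * (\<Sum>(r, w, p)\<in>C1 I. x r w * y r p)
     + \<rho> * (\<Sum>(r1, r2, w, p)\<in>C2 I. x r1 w * y r2 p)
     + \<rho> * (\<Sum>(r1, r2, w1, w2)\<in>C3 I. x r1 w1 * x r2 w2)
     + \<rho> * (\<Sum>(r1, r2, p1, p2)\<in>C4 I. y r1 p1 * y r2 p2)"

definition Mconst :: "('v, 'e, 'c, 'r, 'l) rwap \<Rightarrow> real" where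
  "Mconst I = Max ((\<lambda>r. Max (blen I ` work I r) + Max (blen I ` prot I r)) ` reqs I)"

end

theory Submission
  imports Defs
begin

lemma req_bound:
  fixes n m :: nat and \<alpha> \<beta> \<rho> wm pm BW BP :: real
  assumes a: "\<alpha>>0" and w: "wm \<ge> 1" and p: "pm \<ge> 1" and bw: "BW \<ge> wm * n" and bp: "BP \<ge> pm * m"
    and b: "\<beta> \<ge> \<alpha>*(wm+pm)" and r: "\<rho> > \<beta> - \<alpha>"
  shows "\<alpha>*(BW+BP) - \<beta>*n + \<rho>*(real n - real m)^2 + \<rho>*(real n-1)*real n \<ge> \<alpha>*(wm+pm) - \<beta>
         + (if n = m \<and> n \<le> 1 then 0 else \<rho> - \<beta> + \<alpha>)"
proof -
  have e1: "\<alpha>*BW \<ge> \<alpha>*wm*n" using bw a by (simp add: mult_left_mono mult.assoc)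
  have e2: "\<alpha>*BP \<ge> \<alpha>*pm*m" using bp a by (simp add: mult_left_mono mult.assoc)
  have h2: "\<alpha>*2 \<le> \<alpha>*(wm+pm)" using a w p by (intro mult_left_mono) auto
  have aw: "\<alpha>*wm \<ge> \<alpha>" "\<alpha>*pm \<ge> \<alpha>" using a w p by auto
  have b2: "\<beta> \<ge> 2*\<alpha>" using h2 b a by linarith
  have rp: "\<rho> > 0" "\<rho> > \<alpha>" using r b2 a by linarith+
  have d: "\<alpha>*(BW+BP) = \<alpha>*BW + \<alpha>*BP" "\<alpha>*(wm+pm) = \<alpha>*wm+\<alpha>*pm" by (simp_all add: distrib_left)
  have bwp: "\<beta> \<ge> \<alpha>*wm + \<alpha>*pm" using b d by simp
  have sq: "\<rho>*(real n - real m)^2 \<ge> 0" using rp by simp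
  have apm: "\<alpha>*pm*m \<ge> 0" "\<alpha>*wm*n \<ge> 0" using a p w by auto
  consider "n = 0" | "n = 1" | "n \<ge> 2" by linarith
  then show ?thesis
  proof cases
    case 1
    have z: "\<beta>*n = 0" "\<rho>*(real n-1)*real n = 0" "\<alpha>*wm*n = 0" using 1 by simp_all
    show ?thesis
    proof (cases "m = 0")
      case True 
      have "(if n = m \<and> n \<le> 1 then 0 else \<rho> - \<beta> + \<alpha>) = (0::real)" using 1 True by simp
      then show ?thesis using z d e1 e2 bwp apm sq a by linarith
    next
      case False
      then have m1: "real m \<ge> 1" by simp
      have "(real n - real m)^2 = real m * real m" using 1 by (simp add: power2_eq_square)
      also have "\<dots> \<ge> 1" using m1 by (metis mult_mono' mult_1 zero_le_one)
      finally have "\<rho>*(real n - real m)^2 \<ge> \<rho>" using rp by (metis mult_left_mono mult_1_right less_imp_le)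
      moreover have "(if n = m \<and> n \<le> 1 then 0 else \<rho> - \<beta> + \<alpha>) = \<rho> - \<beta> + \<alpha>" using 1 False by simp
      ultimately show ?thesis using z d e1 e2 bwp apm b2 a by linarith
    qed
  next
    case 2
    note nn = 2
    have z: "\<beta>*n = \<beta>" "\<rho>*(real n-1)*real n = 0" "\<alpha>*wm*n = \<alpha>*wm" using 2 by simp_all
    consider "m = 0" | "m = 1" | "m \<ge> 2" by linarith
    then show ?thesis
    proof cases
      case 1
      have "(if n = m \<and> n \<le> 1 then 0 else \<rho> - \<beta> + \<alpha>) = \<rho> - \<beta> + \<alpha>" "\<alpha>*pm*m = 0"
        "\<rho>*(real n - real m)^2 = \<rho>" using 1 nn by simp_all
      then show ?thesis using z d e1 e2 bwp aw a by linarith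
    next
      case 2
      have "(if n = m \<and> n \<le> 1 then 0 else \<rho> - \<beta> + \<alpha>) = 0" "\<alpha>*pm*m = \<alpha>*pm"
        "\<rho>*(real n - real m)^2 = 0" using nn 2 by simp_all
      then show ?thesis using z d e1 e2 bwp aw a by linarith
    next
      case 3
      have m1: "real m \<ge> 2" using 3 by simp
      have "(real n - real m)^2 = (real m - 1) * (real m - 1)" using nn by (simp add: power2_eq_square algebra_simps)
      also have "\<dots> \<ge> 1" using m1 by (metis diff_ge_0_iff_ge le_diff_eq mult_mono' mult_1 one_add_one zero_le_one)
      finally have "\<rho>*(real n - real m)^2 \<ge> \<rho>" using rp by (metis mult_left_mono mult_1_right less_imp_le)
      moreover have "(if n = m \<and> n \<le> 1 then 0 else \<rho> - \<beta> + \<alpha>) = \<rho> - \<beta> + \<alpha>" using nn 3 by simp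
      ultimately show ?thesis using z d e1 e2 bwp apm b2 a aw by linarith
    qed
  next
    case 3
    have n1: "real n \<ge> 2" using 3 by simp
    have t1: "\<rho>*(real n-1)*real n \<ge> \<rho>*(real n - 1)*2" using rp n1
      by (intro mult_left_mono) auto
    have t2: "\<alpha>*wm*n \<ge> \<alpha>*wm*2" using a w n1 by (intro mult_left_mono) auto
    have t4: "(\<rho>*2 - \<beta>)*(real n - 2) \<ge> 0" using n1 rp b2 r by (intro mult_nonneg_nonneg) auto
    have "\<rho>*(real n - 1)*2 - \<beta>*n = (\<rho>*2 - \<beta>)*(real n - 2) + 2*\<rho> - 2*\<beta>"
      by (simp add: algebra_simps)
    moreover have "(if n = m \<and> n \<le> 1 then 0 else \<rho> - \<beta> + \<alpha>) = \<rho> - \<beta> + \<alpha>" using 3 by simp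
    ultimately show ?thesis using t1 t2 t4 e1 e2 sq apm bwp rp aw d a r by linarith
  qed
qed

lemma binary_sum_nat:
  assumes "finite A" "\<forall>w. f w \<in> {0, 1::real}"
  shows "sum f A = real (card {w\<in>A. f w = 1})"
proof -
  have "sum f A = sum (\<lambda>w. if f w = 1 then 1 else 0) A"
    using assms(2) by (intro sum.cong refl) force
  also have "\<dots> = real (card {w\<in>A. f w = 1})"
    using assms(1) by (simp add: sum.If_cases Int_def conj_commute)
  finally show ?thesis .
qed

lemma sum_ge_member:
  fixes f :: "'a \<Rightarrow> real"
  assumes "finite A" "a \<in> A" "\<forall>t\<in>A. f t \<ge> 0" "f a \<ge> 1"
  shows "sum f A \<ge> 1"
  using member_le_sum[of a A f] assms by force

lemma blen_ge1:
  assumes inst: "rwap_instance I" and r: "r \<in> reqs I" and l: "l \<in> work I r \<union> prot I r"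
  shows "blen I l \<ge> 1"
proof -
  have ap: "pre_digraph.apath (graph I) (src I r) (lpath I l) (dst I r)" and ne: "src I r \<noteq> dst I r"
    using inst r l unfolding rwap_instance_def by auto
  have "lpath I l \<noteq> []" using ap ne by (auto simp: pre_digraph.apath_def pre_digraph.awalk_def pre_digraph.cas.simps)
  then have "set (lpath I l) \<noteq> {}" by simp
  then have "card (set (lpath I l)) \<ge> 1" by (simp add: Suc_leI card_gt_0_iff)
  then show ?thesis unfolding blen_def links_def by simp
qed

lemma finite_Cs:
  assumes inst: "rwap_instance I"
  shows "finite (C1 I)" "finite (C2 I)" "finite (C3 I)" "finite (C4 I)"
proof -
  define L where "L = (\<Union>r\<in>reqs I. work I r \<union> prot I r)"
  have fr: "finite (reqs I)" using inst by (simp add: rwap_instance_def)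
  have fL: "finite L" unfolding L_def using inst fr by (auto simp: rwap_instance_def)
  have "C1 I \<subseteq> reqs I \<times> L \<times> L" unfolding C1_def L_def by auto
  then show "finite (C1 I)" using fr fL by (meson finite_SigmaI finite_subset)
  have "C2 I \<subseteq> reqs I \<times> reqs I \<times> L \<times> L" unfolding C2_def L_def by auto
  then show "finite (C2 I)" using fr fL by (meson finite_SigmaI finite_subset)
  have "C3 I \<subseteq> reqs I \<times> reqs I \<times> L \<times> L" unfolding C3_def L_def by auto
  then show "finite (C3 I)" using fr fL by (meson finite_SigmaI finite_subset)
  have "C4 I \<subseteq> reqs I \<times> reqs I \<times> L \<times> L" unfolding C4_def L_def by auto
  then show "finite (C4 I)" using fr fL by (meson finite_SigmaI finite_subset)
qed

lemma Q_pos: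
  fixes I :: "('v, 'e, 'c, 'r, 'l) rwap" and \<alpha> \<beta> \<rho> :: real
  assumes inst: "rwap_instance I"
    and \<alpha>_pos: "\<alpha> > 0" and \<beta>_pos: "\<beta> > 0"
    and ratio: "\<beta> / \<alpha> > real (card (reqs I)) * (Mconst I - 2) + 2"
    and \<rho>_big: "\<rho> > \<beta> * (real (card (reqs I)) + 1)
                   - \<alpha> * (1 + (\<Sum>r\<in>reqs I. Min (blen I ` work I r) + Min (blen I ` prot I r)))"
    and \<rho>_pos: "\<rho> > 0"
    and bin: "binary I x y"
    and inf: "\<not> feasible I x y"
  shows "Qobj I \<alpha> \<beta> \<rho> x y > 0"
proof -
  define S where "S r = (\<Sum>w\<in>work I r. x r w)" for r
  define T where "T r = (\<Sum>p\<in>prot I r. y r p)" for r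
  define BW where "BW r = (\<Sum>w\<in>work I r. blen I w * x r w)" for r
  define BP where "BP r = (\<Sum>p\<in>prot I r. blen I p * y r p)" for r
  define wm where "wm r = Min (blen I ` work I r)" for r
  define pm where "pm r = Min (blen I ` prot I r)" for r
  define g where "g r = \<alpha>*(BW r + BP r) - \<beta>*S r + \<rho>*(S r - T r)^2 + \<rho>*((S r - 1)*S r)" for r
  define h where "h r = \<alpha>*(wm r + pm r) - \<beta>" for r
  define c1 where "c1 = (\<Sum>(r, w, p)\<in>C1 I. x r w * y r p)"
  define c2 where "c2 = (\<Sum>(r1, r2, w, p)\<in>C2 I. x r1 w * y r2 p)"
  define c3 where "c3 = (\<Sum>(r1, r2, w1, w2)\<in>C3 I. x r1 w1 * x r2 w2)"
  define c4 where "c4 = (\<Sum>(r1, r2, p1, p2)\<in>C4 I. y r1 p1 * y r2 p2)"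
  have fr: "finite (reqs I)" using inst by (simp add: rwap_instance_def)
  have fW: "\<And>r. r \<in> reqs I \<Longrightarrow> finite (work I r) \<and> work I r \<noteq> {}"
   and fP: "\<And>r. r \<in> reqs I \<Longrightarrow> finite (prot I r) \<and> prot I r \<noteq> {}"
    using inst by (auto simp: rwap_instance_def)
  have x01: "\<forall>r w. x r w \<in> {0,1}" and y01: "\<forall>r w. y r w \<in> {0,1}" using bin by (auto simp: binary_def)
  have xnn: "\<And>r w. x r w \<ge> 0" and ynn: "\<And>r w. y r w \<ge> 0" using x01 y01
    by (metis insert_iff order_refl singletonD zero_le_one)+
  have Qeq: "Qobj I \<alpha> \<beta> \<rho> x y = (\<Sum>r\<in>reqs I. g r) + \<rho>*c1 + \<rho>*c2 + \<rho>*c3 + \<rho>*c4"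
    unfolding Qobj_def fobj_def g_def c1_def c2_def c3_def c4_def S_def T_def BW_def BP_def
    by (simp add: sum.distrib sum_subtractf sum_distrib_left distrib_left right_diff_distrib)
  have c_nn: "c1 \<ge> 0" "c2 \<ge> 0" "c3 \<ge> 0" "c4 \<ge> 0"
    unfolding c1_def c2_def c3_def c4_def
    by (auto intro!: sum_nonneg simp: xnn ynn)
  have wm1: "wm r \<ge> 1" and pm1: "pm r \<ge> 1" if r: "r \<in> reqs I" for r
    using fW[OF r] fP[OF r] blen_ge1[OF inst r] unfolding wm_def pm_def by auto
  have bnd: "\<alpha> * (wm r + pm r) \<le> \<beta>" if r: "r \<in> reqs I" for r
  proof -
    obtain w where w: "w \<in> work I r" using fW[OF r] by auto
    obtain p where p: "p \<in> prot I r" using fP[OF r] by auto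
    have "wm r \<le> Max (blen I ` work I r)" unfolding wm_def
      using fW[OF r] w by (meson Max_ge Min_le dual_order.trans finite_imageI imageI)
    moreover have "pm r \<le> Max (blen I ` prot I r)" unfolding pm_def
      using fP[OF r] p by (meson Max_ge Min_le dual_order.trans finite_imageI imageI)
    moreover have "Max (blen I ` work I r) + Max (blen I ` prot I r) \<le> Mconst I"
      unfolding Mconst_def using fr r by (intro Max_ge) auto
    ultimately have M: "wm r + pm r \<le> Mconst I" by linarith
    have M2: "Mconst I \<ge> 2" using M wm1[OF r] pm1[OF r] by linarith
    have "card (reqs I) > 0" using fr r card_gt_0_iff by blast
    then have c1: "real (card (reqs I)) \<ge> 1" by simp
    have "(real (card (reqs I)) - 1) * (Mconst I - 2) \<ge> 0" using c1 M2 by simp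
    then have "real (card (reqs I)) * (Mconst I - 2) + 2 \<ge> Mconst I" by (simp add: algebra_simps)
    then have "\<beta> / \<alpha> > Mconst I" using ratio by linarith
    then have "\<beta> > Mconst I * \<alpha>" using \<alpha>_pos by (simp add: pos_less_divide_eq)
    moreover have "\<alpha> * (wm r + pm r) \<le> \<alpha> * Mconst I" using M \<alpha>_pos by simp
    ultimately show ?thesis by (simp add: mult.commute)
  qed
  have sumh: "(\<Sum>r\<in>reqs I. h r) = \<alpha> * (\<Sum>r\<in>reqs I. wm r + pm r) - \<beta> * real (card (reqs I))"
    unfolding h_def by (simp add: sum_subtractf sum_distrib_left)
  have rb: "\<rho> > \<beta> * (real (card (reqs I)) + 1) - \<alpha> * (1 + (\<Sum>r\<in>reqs I. wm r + pm r))"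
    using \<rho>_big unfolding wm_def pm_def .
  have \<rho>_gt: "\<rho> > \<beta> - \<alpha>"
  proof -
    have "(\<Sum>r\<in>reqs I. \<alpha> * (wm r + pm r)) \<le> (\<Sum>r\<in>reqs I. \<beta>)"
      using bnd by (rule sum_mono)
    then have "\<alpha> * (\<Sum>r\<in>reqs I. wm r + pm r) \<le> \<beta> * real (card (reqs I))"
      by (simp add: sum_distrib_left mult.commute)
    then show ?thesis using rb by (simp add: algebra_simps)
  qed
  have b2: "\<beta> \<ge> \<alpha>"
  proof (cases "reqs I = {}")
    case True
    then have "\<beta> / \<alpha> > 2" using ratio by simp
    then show ?thesis using \<alpha>_pos by (simp add: pos_less_divide_eq)
  next
    case False
    then obtain r where r: "r \<in> reqs I" by auto
    have "\<alpha>*(wm r+pm r) \<ge> \<alpha>*2" using \<alpha>_pos wm1[OF r] pm1[OF r] by (intro mult_left_mono) auto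
    then show ?thesis using bnd[OF r] \<alpha>_pos by linarith
  qed
  have gh: "g r \<ge> h r + (if S r = T r \<and> S r \<le> 1 then 0 else \<rho> - \<beta> + \<alpha>)" if r: "r \<in> reqs I" for r
  proof -
    define n where "n = card {w\<in>work I r. x r w = 1}"
    define m where "m = card {p\<in>prot I r. y r p = 1}"
    have Sn: "S r = real n" unfolding S_def n_def
      using fW[OF r] x01 by (intro binary_sum_nat) auto
    have Tm: "T r = real m" unfolding T_def m_def
      using fP[OF r] y01 by (intro binary_sum_nat) auto
    have bw: "BW r \<ge> wm r * real n"
    proof -
      have "(\<Sum>w\<in>work I r. wm r * x r w) \<le> BW r" unfolding BW_def
        using fW[OF r] xnn unfolding wm_def by (intro sum_mono mult_right_mono) auto
      moreover have "(\<Sum>w\<in>work I r. wm r * x r w) = wm r * S r" unfolding S_def by (simp add: sum_distrib_left)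
      ultimately show ?thesis using Sn by simp
    qed
    have bp: "BP r \<ge> pm r * real m"
    proof -
      have "(\<Sum>p\<in>prot I r. pm r * y r p) \<le> BP r" unfolding BP_def
        using fP[OF r] ynn unfolding pm_def by (intro sum_mono mult_right_mono) auto
      moreover have "(\<Sum>p\<in>prot I r. pm r * y r p) = pm r * T r" unfolding T_def by (simp add: sum_distrib_left)
      ultimately show ?thesis using Tm by simp
    qed
    have "\<alpha>*(BW r+BP r) - \<beta>*n + \<rho>*(real n - real m)^2 + \<rho>*(real n-1)*real n \<ge> \<alpha>*(wm r+pm r) - \<beta>
         + (if n = m \<and> n \<le> 1 then 0 else \<rho> - \<beta> + \<alpha>)"
      by (rule req_bound[OF \<alpha>_pos wm1[OF r] pm1[OF r] bw bp bnd[OF r] \<rho>_gt])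
    moreover have "(S r = T r \<and> S r \<le> 1) = (n = m \<and> n \<le> 1)" using Sn Tm by simp
    ultimately show ?thesis unfolding g_def h_def using Sn Tm by (simp add: mult.assoc)
  qed
  have gh0: "g r \<ge> h r" if r: "r \<in> reqs I" for r
  proof -
    have "(if S r = T r \<and> S r \<le> 1 then 0 else \<rho> - \<beta> + \<alpha>) \<ge> 0" using \<rho>_gt by simp
    then show ?thesis using gh[OF r] by linarith
  qed
  have sumg: "(\<Sum>r\<in>reqs I. g r) \<ge> (\<Sum>r\<in>reqs I. h r)" using gh0 by (rule sum_mono)
  have xo: "\<And>r w. x r w = 0 \<or> x r w = 1" and yo: "\<And>r w. y r w = 0 \<or> y r w = 1"
    using x01 y01 by auto
  have cases: "(\<exists>r\<in>reqs I. \<not> (S r = T r \<and> S r \<le> 1)) \<or> c1 \<ge> 1 \<or> c2 \<ge> 1 \<or> c3 \<ge> 1 \<or> c4 \<ge> 1"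
  proof -
    have "\<not> ((\<forall>r\<in>reqs I. S r = T r \<and> S r \<le> 1) \<and>
     (\<forall>(r, w, p)\<in>C1 I. x r w + y r p \<le> 1) \<and>
     (\<forall>(r1, r2, w, p)\<in>C2 I. x r1 w + y r2 p \<le> 1) \<and>
     (\<forall>(r1, r2, w1, w2)\<in>C3 I. x r1 w1 + x r2 w2 \<le> 1) \<and>
     (\<forall>(r1, r2, p1, p2)\<in>C4 I. y r1 p1 + y r2 p2 \<le> 1))"
      using inf bin unfolding feasible_def S_def T_def by blast
    note neg = this
    consider (a) "\<exists>r\<in>reqs I. \<not> (S r = T r \<and> S r \<le> 1)"
      | (b) r w p where "(r, w, p) \<in> C1 I" "\<not> x r w + y r p \<le> 1"
      | (c) r1 r2 w p where "(r1, r2, w, p) \<in> C2 I" "\<not> x r1 w + y r2 p \<le> 1"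
      | (d) r1 r2 w1 w2 where "(r1, r2, w1, w2) \<in> C3 I" "\<not> x r1 w1 + x r2 w2 \<le> 1"
      | (e) r1 r2 p1 p2 where "(r1, r2, p1, p2) \<in> C4 I" "\<not> y r1 p1 + y r2 p2 \<le> 1"
    proof -
      show thesis
      proof (cases "\<exists>r\<in>reqs I. \<not> (S r = T r \<and> S r \<le> 1)")
        case True then show ?thesis by (rule that(1))
      next
        case F0: False
        show ?thesis
        proof (cases "\<forall>(r, w, p)\<in>C1 I. x r w + y r p \<le> 1")
          case False
          then obtain t where t: "t \<in> C1 I" "\<not> (case t of (r, w, p) \<Rightarrow> x r w + y r p \<le> 1)" by blast
          obtain r w p where "t = (r, w, p)" by (cases t) auto
          then show ?thesis using t that(2) by simp
        next
          case F1: True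
          show ?thesis
          proof (cases "\<forall>(r1, r2, w, p)\<in>C2 I. x r1 w + y r2 p \<le> 1")
            case False
            then obtain t where t: "t \<in> C2 I" "\<not> (case t of (r1, r2, w, p) \<Rightarrow> x r1 w + y r2 p \<le> 1)" by blast
            obtain r1 r2 w p where "t = (r1, r2, w, p)" by (cases t) auto
            then show ?thesis using t that(3) by simp
          next
            case F2: True
            show ?thesis
            proof (cases "\<forall>(r1, r2, w1, w2)\<in>C3 I. x r1 w1 + x r2 w2 \<le> 1")
              case False
              then obtain t where t: "t \<in> C3 I" "\<not> (case t of (r1, r2, w1, w2) \<Rightarrow> x r1 w1 + x r2 w2 \<le> 1)" by blast
              obtain r1 r2 w1 w2 where "t = (r1, r2, w1, w2)" by (cases t) auto
              then show ?thesis using t that(4) by simp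
            next
              case F3: True
              have "\<not> (\<forall>(r1, r2, p1, p2)\<in>C4 I. y r1 p1 + y r2 p2 \<le> 1)"
                using neg F0 F1 F2 F3 by blast
              then obtain t where t: "t \<in> C4 I" "\<not> (case t of (r1, r2, p1, p2) \<Rightarrow> y r1 p1 + y r2 p2 \<le> 1)" by blast
              obtain r1 r2 p1 p2 where "t = (r1, r2, p1, p2)" by (cases t) auto
              then show ?thesis using t that(5) by simp
            qed
          qed
        qed
      qed
    qed
    then show ?thesis
    proof cases
      case a then show ?thesis by blast
    next
      case (b r w p)
      then have "x r w * y r p \<ge> 1" using xo[of r w] yo[of r p] by auto
      then have "c1 \<ge> 1" unfolding c1_def
        by (intro sum_ge_member[OF finite_Cs(1)[OF inst] b(1)]) (auto simp: xnn ynn)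
      then show ?thesis by blast
    next
      case (c r1 r2 w p)
      then have "x r1 w * y r2 p \<ge> 1" using xo[of r1 w] yo[of r2 p] by auto
      then have "c2 \<ge> 1" unfolding c2_def
        by (intro sum_ge_member[OF finite_Cs(2)[OF inst] c(1)]) (auto simp: xnn ynn)
      then show ?thesis by blast
    next
      case (d r1 r2 w1 w2)
      then have "x r1 w1 * x r2 w2 \<ge> 1" using xo[of r1 w1] xo[of r2 w2] by auto
      then have "c3 \<ge> 1" unfolding c3_def
        by (intro sum_ge_member[OF finite_Cs(3)[OF inst] d(1)]) (auto simp: xnn ynn)
      then show ?thesis by blast
    next
      case (e r1 r2 p1 p2)
      then have "y r1 p1 * y r2 p2 \<ge> 1" using yo[of r1 p1] yo[of r2 p2] by auto
      then have "c4 \<ge> 1" unfolding c4_def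
        by (intro sum_ge_member[OF finite_Cs(4)[OF inst] e(1)]) (auto simp: xnn ynn)
      then show ?thesis by blast
    qed
  qed
  have dd: "\<beta> * (real (card (reqs I)) + 1) = \<beta> * real (card (reqs I)) + \<beta>"
    "\<alpha> * (1 + (\<Sum>r\<in>reqs I. wm r + pm r)) = \<alpha> + \<alpha> * (\<Sum>r\<in>reqs I. wm r + pm r)"
    by (simp_all add: algebra_simps)
  have pc: "\<rho>*c1 \<ge> 0" "\<rho>*c2 \<ge> 0" "\<rho>*c3 \<ge> 0" "\<rho>*c4 \<ge> 0"
    using c_nn \<rho>_pos by simp_all
  from cases show ?thesis
  proof (elim disjE)
    assume "\<exists>r\<in>reqs I. \<not> (S r = T r \<and> S r \<le> 1)"
    then obtain r0 where r0: "r0 \<in> reqs I" and nl: "\<not> (S r0 = T r0 \<and> S r0 \<le> 1)" by blast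
    have "(\<Sum>r\<in>reqs I. g r) = g r0 + (\<Sum>r\<in>reqs I - {r0}. g r)" using fr r0 by (simp add: sum.remove)
    also have "\<dots> \<ge> h r0 + (\<rho> - \<beta> + \<alpha>) + (\<Sum>r\<in>reqs I - {r0}. h r)"
    proof -
      have "(\<Sum>r\<in>reqs I - {r0}. g r) \<ge> (\<Sum>r\<in>reqs I - {r0}. h r)"
        using gh0 by (intro sum_mono) auto
      moreover have "g r0 \<ge> h r0 + (\<rho> - \<beta> + \<alpha>)" using gh[OF r0] nl by simp
      ultimately show ?thesis by linarith
    qed
    finally have "(\<Sum>r\<in>reqs I. g r) \<ge> (\<Sum>r\<in>reqs I. h r) + (\<rho> - \<beta> + \<alpha>)"
      using fr r0 by (simp add: sum.remove)
    then show ?thesis using Qeq pc sumh rb dd by linarith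
  next
    assume "c1 \<ge> 1"
    then have "\<rho>*c1 \<ge> \<rho>" using \<rho>_pos by (metis mult_left_mono mult_1_right less_imp_le)
    then show ?thesis using Qeq pc sumh sumg rb b2 dd by linarith
  next
    assume "c2 \<ge> 1"
    then have "\<rho>*c2 \<ge> \<rho>" using \<rho>_pos by (metis mult_left_mono mult_1_right less_imp_le)
    then show ?thesis using Qeq pc sumh sumg rb b2 dd by linarith
  next
    assume "c3 \<ge> 1"
    then have "\<rho>*c3 \<ge> \<rho>" using \<rho>_pos by (metis mult_left_mono mult_1_right less_imp_le)
    then show ?thesis using Qeq pc sumh sumg rb b2 dd by linarith
  next
    assume "c4 \<ge> 1"
    then have "\<rho>*c4 \<ge> \<rho>" using \<rho>_pos by (metis mult_left_mono mult_1_right less_imp_le)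
    then show ?thesis using Qeq pc sumh sumg rb b2 dd by linarith
  qed
qed



lemma bin_prod0: "a \<in> {0,1} \<Longrightarrow> b \<in> {0,1} \<Longrightarrow> a + b \<le> (1::real) \<Longrightarrow> a * b = 0"
  by auto

lemma Q_eq_f:
  assumes inst: "rwap_instance I" and fe: "feasible I x y"
  shows "Qobj I \<alpha> \<beta> \<rho> x y = fobj I \<alpha> \<beta> x y"
proof -
  have bin: "binary I x y" using fe by (simp add: feasible_def)
  have x01: "\<forall>r w. x r w \<in> {0,1}" and y01: "\<forall>r w. y r w \<in> {0,1}" using bin by (auto simp: binary_def)
  have xo: "\<And>r w. x r w = 0 \<or> x r w = 1" and yo: "\<And>r w. y r w = 0 \<or> y r w = 1"
    using x01 y01 by auto
  have loc: "\<And>r. r \<in> reqs I \<Longrightarrow> (\<Sum>w\<in>work I r. x r w) = (\<Sum>p\<in>prot I r. y r p) \<and> (\<Sum>w\<in>work I r. x r w) \<le> 1"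
    using fe unfolding feasible_def by blast
  have s01: "(\<Sum>w\<in>work I r. x r w) = 0 \<or> (\<Sum>w\<in>work I r. x r w) = 1" if r: "r \<in> reqs I" for r
  proof -
    have fw: "finite (work I r)" using inst r by (simp add: rwap_instance_def)
    have "(\<Sum>w\<in>work I r. x r w) = real (card {w\<in>work I r. x r w = 1})"
      using fw x01 by (intro binary_sum_nat) auto
    moreover have "card {w\<in>work I r. x r w = 1} \<le> 1" using loc[OF r] calculation by simp
    ultimately show ?thesis by (metis le_Suc_eq le_zero_eq of_nat_0 of_nat_1 One_nat_def)
  qed
  have p1: "(\<Sum>r\<in>reqs I. ((\<Sum>w\<in>work I r. x r w) - (\<Sum>p\<in>prot I r. y r p))^2) = 0"
    using loc by (intro sum.neutral) auto
  have p2: "(\<Sum>r\<in>reqs I. ((\<Sum>w\<in>work I r. x r w) - 1) * (\<Sum>w\<in>work I r. x r w)) = 0"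
    using s01 by (intro sum.neutral) auto
  have p3: "(\<Sum>(r, w, p)\<in>C1 I. x r w * y r p) = 0"
  proof (intro sum.neutral ballI)
    fix t assume t: "t \<in> C1 I"
    obtain r w p where tt: "t = (r, w, p)" by (cases t) auto
    have "x r w + y r p \<le> 1" using fe t tt unfolding feasible_def by fastforce
    then show "(case t of (r, w, p) \<Rightarrow> x r w * y r p) = 0" using tt bin_prod0 x01 y01 by auto
  qed
  have p4: "(\<Sum>(r1, r2, w, p)\<in>C2 I. x r1 w * y r2 p) = 0"
  proof (intro sum.neutral ballI)
    fix t assume t: "t \<in> C2 I"
    obtain r1 r2 w p where tt: "t = (r1, r2, w, p)" by (cases t) auto
    have "x r1 w + y r2 p \<le> 1" using fe t tt unfolding feasible_def by fastforce
    then show "(case t of (r1, r2, w, p) \<Rightarrow> x r1 w * y r2 p) = 0" using tt bin_prod0 x01 y01 by auto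
  qed
  have p5: "(\<Sum>(r1, r2, w1, w2)\<in>C3 I. x r1 w1 * x r2 w2) = 0"
  proof (intro sum.neutral ballI)
    fix t assume t: "t \<in> C3 I"
    obtain r1 r2 w1 w2 where tt: "t = (r1, r2, w1, w2)" by (cases t) auto
    have "x r1 w1 + x r2 w2 \<le> 1" using fe t tt unfolding feasible_def by fastforce
    then show "(case t of (r1, r2, w1, w2) \<Rightarrow> x r1 w1 * x r2 w2) = 0" using tt bin_prod0 x01 y01 by auto
  qed
  have p6: "(\<Sum>(r1, r2, p1, p2)\<in>C4 I. y r1 p1 * y r2 p2) = 0"
  proof (intro sum.neutral ballI)
    fix t assume t: "t \<in> C4 I"
    obtain r1 r2 p1 p2 where tt: "t = (r1, r2, p1, p2)" by (cases t) auto
    have "y r1 p1 + y r2 p2 \<le> 1" using fe t tt unfolding feasible_def by fastforce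
    then show "(case t of (r1, r2, p1, p2) \<Rightarrow> y r1 p1 * y r2 p2) = 0" using tt bin_prod0 x01 y01 by auto
  qed
  show ?thesis unfolding Qobj_def using p1 p2 p3 p4 p5 p6 by simp
qed

theorem proposition4:
  fixes I :: "('v, 'e, 'c, 'r, 'l) rwap" and \<alpha> \<beta> \<rho> :: real
  assumes inst: "rwap_instance I"
    and \<alpha>_pos: "\<alpha> > 0" and \<beta>_pos: "\<beta> > 0"
    and ratio: "\<beta> / \<alpha> > real (card (reqs I)) * (Mconst I - 2) + 2"
    and \<rho>_big: "\<rho> > \<beta> * (real (card (reqs I)) + 1)
                   - \<alpha> * (1 + (\<Sum>r\<in>reqs I. Min (blen I ` work I r) + Min (blen I ` prot I r)))"
    and \<rho>_pos: "\<rho> > 0"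
    and bin: "binary I x y"
    and minQ: "\<forall>x' y'. binary I x' y' \<longrightarrow> Qobj I \<alpha> \<beta> \<rho> x y \<le> Qobj I \<alpha> \<beta> \<rho> x' y'"
  shows "feasible I x y \<and> (\<forall>x' y'. feasible I x' y' \<longrightarrow> fobj I \<alpha> \<beta> x y \<le> fobj I \<alpha> \<beta> x' y')"
  
proof -
  have z: "binary I (\<lambda>_ _. 0) (\<lambda>_ _. 0)" by (simp add: binary_def)
  have Q0: "Qobj I \<alpha> \<beta> \<rho> (\<lambda>_ _. 0) (\<lambda>_ _. 0) = 0" by (simp add: Qobj_def fobj_def)
  have fe: "feasible I x y"
  proof (rule ccontr)
    assume "\<not> feasible I x y"
    then have "Qobj I \<alpha> \<beta> \<rho> x y > 0"
      using Q_pos[OF inst \<alpha>_pos \<beta>_pos ratio \<rho>_big \<rho>_pos bin] by blast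
    moreover have "Qobj I \<alpha> \<beta> \<rho> x y \<le> Qobj I \<alpha> \<beta> \<rho> (\<lambda>_ _. 0) (\<lambda>_ _. 0)"
      using minQ z by blast
    then have "Qobj I \<alpha> \<beta> \<rho> x y \<le> 0" using Q0 by simp
    ultimately show False by simp
  qed
  moreover have "fobj I \<alpha> \<beta> x y \<le> fobj I \<alpha> \<beta> x' y'" if f': "feasible I x' y'" for x' y'
  proof -
    have "fobj I \<alpha> \<beta> x y = Qobj I \<alpha> \<beta> \<rho> x y" using Q_eq_f[OF inst fe] by simp
    also have "\<dots> \<le> Qobj I \<alpha> \<beta> \<rho> x' y'" using minQ f' by (simp add: feasible_def)
    also have "\<dots> = fobj I \<alpha> \<beta> x' y'" using Q_eq_f[OF inst f'] by simp
    finally show ?thesis .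
  qed
  ultimately show ?thesis by blast
qed


end
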